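(* Let $f(n)=a_kn^k+a_{k-1}n^{k-1}+\cdots+a_0\in\mathbb{R}[n]$ be a polynomial of degree $k$ (so $a_k\neq0$). Then the sequence $(f(n))_{n\ge0}$ is: (1) not asymptotically $1$-log-concave if and only if $k=0$; (2) asymptotically $1$-log-concave but not asymptotically $2$-log-concave if and only if $k=1$; (3) asymptotically $r$-log-concave for every $r\geq1$ if and only if $k\geq 2$.
   Context: For a real sequence $\omega=(w_i)_{i\ge0}$ define $\widehat{\mathcal L}\omega=(w_{i+1}^2-w_iw_{i+2})_{i\ge0}$ and $\widehat{\mathcal L}^j\omega=\widehat{\mathcal L}(\widehat{\mathcal L}^{j-1}\omega)$. The sequence $\omega$ is asymptotically $r$-log-concave if there is $N$ such that $(\widehat{\mathcal L}^j\omega)_i>0$ for all $j\in\{1,\ldots,r\}$ and all $i\geq N$. *)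

theory Defs
  imports Complex_Main "HOL-Computational_Algebra.Polynomial"
begin

definition Lhat :: "(nat \<Rightarrow> real) \<Rightarrow> (nat \<Rightarrow> real)" where
  "Lhat w = (\<lambda>i. (w (i + 1))^2 - w i * w (i + 2))"

definition asymp_r_log_concave :: "nat \<Rightarrow> (nat \<Rightarrow> real) \<Rightarrow> bool" where
  "asymp_r_log_concave r w \<longleftrightarrow>
     (\<exists>N. \<forall>j\<in>{1..r}. \<forall>i\<ge>N. (Lhat ^^ j) w i > 0)"

end

theory Submission
  imports Defs
begin

definition sh :: "real poly \<Rightarrow> real poly" where "sh p = pcompose p [:1,1:]"
definition D :: "real poly \<Rightarrow> real poly" where "D p = sh p - p"
definition L :: "real poly \<Rightarrow> real poly" where "L p = D p * sh (D p) - sh p * D (D p)"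

lemma poly_sh[simp]: "poly (sh p) x = poly p (x+1)"
  by (simp add: sh_def poly_pcompose add.commute)

lemma poly_D[simp]: "poly (D p) x = poly p (x+1) - poly p x"
  by (simp add: D_def)

lemma poly_L: "poly (L p) x = (poly p (x+1))^2 - poly p x * poly p (x+2)"
  by (simp add: L_def algebra_simps power2_eq_square)

lemma degree_sh[simp]: "degree (sh p) = degree p"
  by (simp add: sh_def degree_pcompose)

lemma lead_sh[simp]: "lead_coeff (sh p) = lead_coeff p"
  by (simp add: sh_def lead_coeff_comp)

lemma D_pCons: "D (pCons c q) = pCons 0 (D q) + sh q"
  by (simp add: D_def sh_def pcompose_pCons algebra_simps)

lemma D_main: "degree (D p) \<le> degree p - 1 \<and> coeff (D p) (degree p - 1) = of_nat (degree p) * lead_coeff p"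
proof (induction p)
  case 0
  then show ?case by (simp add: D_def sh_def)
next
  case (pCons c q)
  show ?case
  proof (cases "q = 0")
    case True
    then show ?thesis by (simp add: D_def sh_def)
  next
    case False
    let ?d = "degree q"
    have dp: "degree (pCons c q) = Suc ?d" using False by simp
    have lp: "lead_coeff (pCons c q) = lead_coeff q" using False by simp
    have h1: "degree (D q) \<le> ?d - 1" and h2: "coeff (D q) (?d - 1) = of_nat ?d * lead_coeff q"
      using pCons.IH by auto
    have Dq0: "?d = 0 \<Longrightarrow> D q = 0"
    proof -
      assume "?d = 0"
      then have "degree (D q) = 0" "coeff (D q) 0 = 0" using h1 h2 by auto
      then show "D q = 0" by (metis leading_coeff_0_iff)
    qed
    have deg1: "degree (pCons 0 (D q)) \<le> ?d"
    proof (cases "?d = 0")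
      case True then show ?thesis using Dq0 by simp
    next
      case False
      then show ?thesis using h1
        by (metis Suc_pred' bot_nat_0.not_eq_extremum degree_pCons_le le_trans not_less_eq_eq)
    qed
    have c1: "coeff (pCons 0 (D q)) ?d = of_nat ?d * lead_coeff q"
    proof (cases "?d")
      case 0 then show ?thesis using Dq0 by simp
    next
      case (Suc m) then show ?thesis using h2 by simp
    qed
    have "degree (D (pCons c q)) \<le> ?d"
      unfolding D_pCons using deg1 by (simp add: degree_add_le)
    moreover have "coeff (D (pCons c q)) ?d = of_nat (Suc ?d) * lead_coeff q"
    proof -
      have "coeff (sh q) ?d = lead_coeff q" by (metis degree_sh lead_sh)
      then show ?thesis by (simp add: D_pCons c1 algebra_simps)
    qed
    ultimately show ?thesis using dp lp by simp
  qed
qed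

lemma D_deg:
  assumes "degree p = Suc m" "p \<noteq> 0"
  shows "degree (D p) = m" "lead_coeff (D p) = of_nat (Suc m) * lead_coeff p"
proof -
  have a: "degree (D p) \<le> m" "coeff (D p) m = of_nat (Suc m) * lead_coeff p"
    using D_main[of p] assms by auto
  have l: "lead_coeff p \<noteq> 0" using assms(2) leading_coeff_0_iff by blast
  have "coeff (D p) m \<noteq> 0" using a l by (simp add: assms)
  then have "degree (D p) \<ge> m" by (simp add: le_degree)
  then show "degree (D p) = m" using a by simp
  then show "lead_coeff (D p) = of_nat (Suc m) * lead_coeff p" using a by simp
qed

lemma D_const: "degree p = 0 \<Longrightarrow> D p = 0"
  using D_main[of p] by (metis diff_le_self le_zero_eq leading_coeff_0_iff mult_zero_left of_nat_0)

lemma L_deg: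
  assumes "degree p = Suc m" "p \<noteq> 0"
  shows "degree (L p) = 2*m \<and> lead_coeff (L p) = of_nat (Suc m) * (lead_coeff p)^2"
proof (cases m)
  case 0
  then have "D (D p) = 0" using D_deg[OF assms] D_const by simp
  then have Lp: "L p = D p * sh (D p)" by (simp add: L_def)
  have l: "lead_coeff p \<noteq> 0" using assms(2) leading_coeff_0_iff by blast
  have nz: "D p \<noteq> 0" using D_deg[OF assms] l 0 by auto
  have nz2: "sh (D p) \<noteq> 0" using nz
    by (metis lead_sh leading_coeff_0_iff)
  have e1: "degree (L p) = 0" unfolding Lp using D_deg[OF assms] 0 nz nz2 by (simp add: degree_mult_eq)
  have e2: "lead_coeff (L p) = lead_coeff (D p) * lead_coeff (sh (D p))" unfolding Lp by (rule lead_coeff_mult)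
  have e3: "lead_coeff (D p) = lead_coeff p" using D_deg(2)[OF assms] 0 by simp
  show ?thesis using e1 e2 e3 0 lead_sh[of "D p"] by (simp add: power2_eq_square)
next
  case (Suc n)
  let ?a = "lead_coeff p"
  have a0: "?a \<noteq> 0" using assms(2) leading_coeff_0_iff by blast
  have dD: "degree (D p) = Suc n" "lead_coeff (D p) = of_nat (Suc m) * ?a"
    using D_deg[OF assms] Suc by auto
  have nzD: "D p \<noteq> 0" using dD a0 by auto
  have dDD: "degree (D (D p)) = n" "lead_coeff (D (D p)) = of_nat (Suc n) * (of_nat (Suc m) * ?a)"
    using D_deg[OF dD(1) nzD] dD by auto
  have nzDD: "D (D p) \<noteq> 0" using dDD a0 by auto
  have nzs: "sh (D p) \<noteq> 0" using nzD by (metis lead_sh leading_coeff_0_iff)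
  have nzsp: "sh p \<noteq> 0" using assms by (metis lead_sh leading_coeff_0_iff)
  define A where "A = D p * sh (D p)"
  define B where "B = sh p * D (D p)"
  have dA1: "degree A = 2*m" unfolding A_def using dD nzD nzs Suc by (simp add: degree_mult_eq)
  have dA2: "lead_coeff A = of_nat (Suc m)^2 * ?a^2"
    unfolding A_def lead_coeff_mult lead_sh dD(2) by (simp add: power2_eq_square algebra_simps)
  have dB1: "degree B = 2*m" unfolding B_def using dDD nzDD nzsp Suc assms by (simp add: degree_mult_eq)
  have dB2: "lead_coeff B = of_nat (Suc m) * of_nat m * ?a^2"
    unfolding B_def lead_coeff_mult lead_sh dDD(2) using Suc by (simp add: power2_eq_square algebra_simps)
  note dA = dA1 dA2
  note dB = dB1 dB2
  have LAB: "L p = A - B" by (simp add: L_def A_def B_def)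
  have c: "coeff (L p) (2*m) = of_nat (Suc m) * ?a^2"
    unfolding LAB using dA dB by (simp add: algebra_simps power2_eq_square)
  have le: "degree (L p) \<le> 2*m" unfolding LAB
    by (rule degree_diff_le) (simp_all add: dA1 dB1)
  have "coeff (L p) (2*m) \<noteq> 0" using c a0 by simp
  then have "degree (L p) \<ge> 2*m" by (simp add: le_degree)
  then have "degree (L p) = 2*m" using le by simp
  then show ?thesis using c by simp
qed

lemma L_const: "degree p = 0 \<Longrightarrow> L p = 0"
  by (simp add: L_def D_const)

lemma Lhat_poly: "Lhat (\<lambda>n. poly q (real n)) = (\<lambda>n. poly (L q) (real n))"
  by (rule ext) (simp add: Lhat_def poly_L add.commute)

lemma Lhat_iter: "(Lhat ^^ j) (\<lambda>n. poly q (real n)) = (\<lambda>n. poly ((L ^^ j) q) (real n))"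
  by (induction j) (simp_all add: Lhat_poly)

lemma ev_pos: "lead_coeff q > 0 \<Longrightarrow> \<exists>N. \<forall>i\<ge>N. poly q (real i) > 0"
proof -
  assume h: "lead_coeff q > 0"
  obtain n where n: "\<And>x. x \<ge> n \<Longrightarrow> poly q x \<ge> lead_coeff q"
    using poly_pinfty_gt_lc[OF h] by blast
  obtain N :: nat where "real N \<ge> n" using real_arch_simple by blast
  then have "\<forall>i\<ge>N. poly q (real i) > 0"
    using n h by (meson dual_order.trans less_le_trans of_nat_le_iff)
  then show ?thesis by blast
qed

lemma iter_good:
  assumes "degree p \<ge> 2"
  shows "degree ((L ^^ j) p) \<ge> 2 \<and> (j \<ge> 1 \<longrightarrow> lead_coeff ((L ^^ j) p) > 0)"
proof (induction j)
  case 0 then show ?case using assms by simp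
next
  case (Suc j)
  let ?q = "(L ^^ j) p"
  have d2: "degree ?q \<ge> 2" using Suc.IH by blast
  define m where "m = degree ?q - 1"
  have m: "degree ?q = Suc m" "m \<ge> 1" using d2 unfolding m_def by auto
  have nz: "?q \<noteq> 0" using m by auto
  have l: "lead_coeff ?q \<noteq> 0" using nz by simp
  have e: "degree (L ?q) = 2*m" "lead_coeff (L ?q) = real (Suc m) * (lead_coeff ?q)^2"
    using L_deg[OF m(1) nz] by auto
  have "lead_coeff (L ?q) > 0" unfolding e(2)
    using l by (intro mult_pos_pos) simp_all
  moreover have "degree (L ?q) \<ge> 2" using e(1) m(2) by simp
  ultimately show ?case by simp
qed

lemma all_r:
  assumes "degree p \<ge> 2"
  shows "asymp_r_log_concave r (\<lambda>n. poly p (real n))"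
proof -
  have "\<forall>j\<in>{1..r}. eventually (\<lambda>i. (Lhat ^^ j) (\<lambda>n. poly p (real n)) i > 0) sequentially"
  proof
    fix j assume "j \<in> {1..r}"
    then have "lead_coeff ((L ^^ j) p) > 0" using iter_good[OF assms, of j] by auto
    then show "eventually (\<lambda>i. (Lhat ^^ j) (\<lambda>n. poly p (real n)) i > 0) sequentially"
      unfolding Lhat_iter eventually_sequentially using ev_pos by blast
  qed
  then have "eventually (\<lambda>i. \<forall>j\<in>{1..r}. (Lhat ^^ j) (\<lambda>n. poly p (real n)) i > 0) sequentially"
    by (simp add: eventually_ball_finite)
  then show ?thesis unfolding asymp_r_log_concave_def eventually_sequentially by blast
qed

lemma deg0_not1:
  assumes "degree p = 0"
  shows "\<not> asymp_r_log_concave 1 (\<lambda>n. poly p (real n))"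
proof -
  have "(Lhat ^^ 1) (\<lambda>n. poly p (real n)) = (\<lambda>n. 0)"
    using Lhat_iter[of 1 p] L_const[OF assms] by simp
  then show ?thesis unfolding asymp_r_log_concave_def by auto
qed

lemma deg1:
  assumes "degree p = 1"
  shows "asymp_r_log_concave 1 (\<lambda>n. poly p (real n))" "\<not> asymp_r_log_concave 2 (\<lambda>n. poly p (real n))"
proof -
  have nz: "p \<noteq> 0" using assms by auto
  have ds: "degree p = Suc 0" using assms by simp
  have e1: "degree (L p) = 0" using conjunct1[OF L_deg[OF ds nz]] by simp
  have e2: "lead_coeff (L p) = (lead_coeff p)^2" using conjunct2[OF L_deg[OF ds nz]] by simp
  have d: "degree (L p) = 0 \<and> lead_coeff (L p) = (lead_coeff p)^2" using e1 e2 by blast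
  have l: "lead_coeff p \<noteq> 0" using nz by simp
  have "lead_coeff (L p) > 0" using d l by (metis zero_less_power2)
  then obtain N where N: "\<forall>i\<ge>N. poly (L p) (real i) > 0" using ev_pos by blast
  show "asymp_r_log_concave 1 (\<lambda>n. poly p (real n))"
    unfolding asymp_r_log_concave_def using N Lhat_iter[of 1 p] by auto
  have "(Lhat ^^ 2) (\<lambda>n. poly p (real n)) = (\<lambda>n. 0)"
    using Lhat_iter[of 2 p] L_const[of "L p"] d by (simp add: numeral_2_eq_2)
  then show "\<not> asymp_r_log_concave 2 (\<lambda>n. poly p (real n))"
    unfolding asymp_r_log_concave_def by (metis atLeastAtMost_iff le_refl less_irrefl one_le_numeral)
qed

theorem corollary4p10:
  fixes p :: "real poly" and k :: nat
  assumes "p \<noteq> 0" and "k = degree p"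
  shows "(\<not> asymp_r_log_concave 1 (\<lambda>n. poly p (real n)) \<longleftrightarrow> k = 0)
       \<and> ((asymp_r_log_concave 1 (\<lambda>n. poly p (real n)) \<and>
           \<not> asymp_r_log_concave 2 (\<lambda>n. poly p (real n))) \<longleftrightarrow> k = 1)
       \<and> ((\<forall>r\<ge>1. asymp_r_log_concave r (\<lambda>n. poly p (real n))) \<longleftrightarrow> k \<ge> 2)"
proof -
  consider "k = 0" | "k = 1" | "k \<ge> 2" by linarith
  then show ?thesis
  proof cases
    case 1
    then show ?thesis using deg0_not1[of p] assms by auto
  next
    case 2
    have "\<not> (\<forall>r\<ge>1. asymp_r_log_concave r (\<lambda>n. poly p (real n)))"
      using deg1(2)[of p] assms 2 by (metis one_le_numeral)
    then show ?thesis using deg1[of p] assms 2 by auto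
  next
    case 3
    then show ?thesis using all_r[of p] assms by auto
  qed
qed

end
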